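(* Let $\Gamma$ be a lattice with periodic boundary conditions as below, let $\mathcal{X}$ be an artificial boundary, let $S_E\subseteq C_1(\Gamma)$ be the set of edges carrying nonzero syndrome of some bit-flip error, i.e. $S_E=\partial(F_0)$ for some set of faces $F_0$, and let $\mathcal{E}$ be the set of faces returned by Procedure P5 on input $(S_E,\mathcal{X})$. Then: (a) (Existence) there exists a set of faces $\hat{\mathcal{E}}\subseteq\mathcal{E}\cup\mathcal{X}$ with $\partial(\hat{\mathcal{E}})=S_E$; (b) (Uniqueness) if $\hat{\mathcal{E}}_1,\hat{\mathcal{E}}_2\subseteq\mathcal{E}\cup\mathcal{X}$ satisfy $\partial(\hat{\mathcal{E}}_1)=\partial(\hat{\mathcal{E}}_2)=S_E$, then $\hat{\mathcal{E}}_1\triangle\hat{\mathcal{E}}_2\subseteq\mathcal{X}$, i.e. $\hat{\mathcal{E}}_1\setminus\mathcal{X}=\hat{\mathcal{E}}_2\setminus\mathcal{X}$.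
   Context: $\Gamma$ is a finite, connected three-dimensional cell complex without boundary (periodic boundary conditions), with edges $C_1(\Gamma)$, faces $C_2(\Gamma)$, volumes $C_3(\Gamma)$; every face lies in the boundary of exactly two distinct volumes and the dual complex is connected. $\partial(f)$ is the set of boundary edges of face $f$, $\partial(\nu)$ the set of boundary faces of volume $\nu$, $\iota(e)$ the set of faces containing edge $e$; for a set of faces $F$, $\partial(F)$ is the symmetric difference of the $\partial(f)$, $f\in F$, and $\triangle$ denotes symmetric difference. The 3D toric code on $\Gamma$ has one qubit per face, stabilizer group generated by $B_e=\prod_{f\in\iota(e)}Z_f$ and $A_\nu=\prod_{f\in\partial(\nu)}X_f$, and encodes $k$ logical qubits; a logical operator is a Pauli operator commuting with all stabilizers but not in the stabilizer group (up to phase); $X_S=\prod_{f\in S}X_f$. Fix $X$-type logical operators $\bar X_1,\dots,\bar X_k$, one per logical qubit. An artificial boundary is a set $\mathcal{X}=\bigcup_{i=1}^k\mathrm{supp}(\bar X_i^r)$, where each $\bar X_i^r$ is an $X$-type operator with $\bar X_i^r\bar X_i$ an $X$-type stabilizer, such that $\mathcal{X}$ contains no nonempty set $S$ with $X_S$ a stabilizer. A face path is a sequence of faces $\rho=(f_1,\dots,f_m)$ with pairwise distinct volumes $\Lambda(\rho)=(\nu_1,\dots,\nu_{m-1})$, $f_i,f_{i+1}\in\partial(\nu_i)$. A set of faces $K$ is a cut set of $\Gamma$ if there exist volumes $\nu,\nu'$ such that every face path $\rho$ with $f_1\in\partial(\nu)$, $f_m\in\partial(\nu')$, $\nu,\nu'\notin\Lambda(\rho)$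 meets $K$. Procedure P5 (input $S_E,\mathcal{X}$): set $\mathcal{E}=\emptyset$, $B=S_E$, all faces unexplored. Repeat rounds until all faces of $C_2(\Gamma)\setminus\mathcal{X}$ are explored: set $B'=\emptyset$; for each unexplored face $f\in C_2(\Gamma)\setminus\mathcal{X}$ with $\partial(f)\cap B\ne\emptyset$, mark $f$ explored and, if $\mathcal{X}\cup\mathcal{E}\cup\{f\}$ is not a cut set of $\Gamma$, set $\mathcal{E}\leftarrow\mathcal{E}\cup\{f\}$ and $B'\leftarrow B'\cup\partial(f)$; at the end of the round set $B\leftarrow B'\setminus B$. It is assumed that the procedure terminates with every face of $C_2(\Gamma)\setminus\mathcal{X}$ explored; it returns $\mathcal{E}$ (so $\mathcal{E}\cap\mathcal{X}=\emptyset$). *)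

theory Defs
  imports Main
begin

text \<open>For I a set of faces and A = boundary-of-face this is the paper's
boundary of a set of faces; for I a set of volumes it is the mod-2 sum of volume boundaries.\<close>
definition sdsum :: "('i \<Rightarrow> 'a set) \<Rightarrow> 'i set \<Rightarrow> 'a set" where
  "sdsum A I = {x. odd (card {i \<in> I. x \<in> A i})}"

definition symdiff :: "'a set \<Rightarrow> 'a set \<Rightarrow> 'a set" where
  "symdiff S T = (S - T) \<union> (T - S)"

text \<open>P = vertices (0-cells), E = edges, F = faces, V = volumes;
 bde e = boundary vertices of edge e, bdf f = boundary edges of face f,
 bdv v = boundary faces of volume v.\<close>
definition periodic_cell_complex ::
  "'p set \<Rightarrow> 'e set \<Rightarrow> 'f set \<Rightarrow> 'v set \<Rightarrow> ('e \<Rightarrow> 'p set) \<Rightarrow> ('f \<Rightarrow> 'e set) \<Rightarrow> ('v \<Rightarrow> 'f set) \<Rightarrow> bool"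
where
  "periodic_cell_complex P E F V bde bdf bdv \<longleftrightarrow>
     finite P \<and> finite E \<and> finite F \<and> finite V \<and>
     (\<forall>e\<in>E. bde e \<subseteq> P \<and> bde e \<noteq> {} \<and> card (bde e) \<le> 2) \<and>
     (\<forall>f\<in>F. bdf f \<subseteq> E) \<and>
     (\<forall>v\<in>V. bdv v \<subseteq> F) \<and>
     \<comment> \<open>chain complex condition: boundary of boundary of a volume vanishes mod 2\<close>
     (\<forall>v\<in>V. sdsum bdf (bdv v) = {}) \<and>
     \<comment> \<open>no boundary: every face lies in the boundary of exactly two distinct volumes\<close>
     (\<forall>f\<in>F. card {v \<in> V. f \<in> bdv v} = 2) \<and>
     \<comment> \<open>connected (1-skeleton)\<close>
     (\<forall>u\<in>P. \<forall>w\<in>P. (u, w) \<in> {(a, b). \<exists>e\<in>E. a \<in> bde e \<and> b \<in> bde e}\<^sup>*) \<and>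
     \<comment> \<open>dual complex connected\<close>
     (\<forall>v\<in>V. \<forall>w\<in>V. (v, w) \<in> {(a, b). a \<in> V \<and> b \<in> V \<and> (\<exists>f\<in>F. f \<in> bdv a \<and> f \<in> bdv b)}\<^sup>*)"

text \<open>X_S is (up to phase) in the stabilizer group iff S is a mod-2 sum of volume boundaries (product of A_v).\<close>
definition x_stab :: "'v set \<Rightarrow> ('v \<Rightarrow> 'f set) \<Rightarrow> 'f set \<Rightarrow> bool" where
  "x_stab V bdv S \<longleftrightarrow> (\<exists>W \<subseteq> V. S = sdsum bdv W)"

text \<open>X_S commutes with all stabilizers iff it commutes with every B_e, i.e. its
 (mod 2) boundary is empty; it is a logical operator if moreover it is not a stabilizer.\<close>
definition x_logical :: "'f set \<Rightarrow> 'v set \<Rightarrow> ('f \<Rightarrow> 'e set) \<Rightarrow> ('v \<Rightarrow> 'f set) \<Rightarrow> 'f set \<Rightarrow> bool" where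
  "x_logical F V bdf bdv S \<longleftrightarrow> S \<subseteq> F \<and> sdsum bdf S = {} \<and> \<not> x_stab V bdv S"

text \<open>Lx 0, ..., Lx (k-1): one X-type logical operator per logical qubit, i.e. their classes
 form a basis of the X-type logical operators modulo X-type stabilizers (k = number of
 encoded qubits).\<close>
definition x_logical_basis ::
  "'f set \<Rightarrow> 'v set \<Rightarrow> ('f \<Rightarrow> 'e set) \<Rightarrow> ('v \<Rightarrow> 'f set) \<Rightarrow> nat \<Rightarrow> (nat \<Rightarrow> 'f set) \<Rightarrow> bool"
where
  "x_logical_basis F V bdf bdv k Lx \<longleftrightarrow>
     (\<forall>i<k. x_logical F V bdf bdv (Lx i)) \<and>
     (\<forall>I \<subseteq> {..<k}. I \<noteq> {} \<longrightarrow> \<not> x_stab V bdv (sdsum Lx I)) \<and>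
     (\<forall>S \<subseteq> F. sdsum bdf S = {} \<longrightarrow> (\<exists>I \<subseteq> {..<k}. x_stab V bdv (symdiff S (sdsum Lx I))))"

definition artificial_boundary ::
  "'f set \<Rightarrow> 'v set \<Rightarrow> ('v \<Rightarrow> 'f set) \<Rightarrow> nat \<Rightarrow> (nat \<Rightarrow> 'f set) \<Rightarrow> 'f set \<Rightarrow> bool"
where
  "artificial_boundary F V bdv k Lx Xb \<longleftrightarrow>
     (\<exists>Lr :: nat \<Rightarrow> 'f set.
        (\<forall>i<k. Lr i \<subseteq> F \<and> x_stab V bdv (symdiff (Lr i) (Lx i))) \<and>
        Xb = (\<Union>i<k. Lr i) \<and>
        (\<forall>S \<subseteq> Xb. S \<noteq> {} \<longrightarrow> \<not> x_stab V bdv S))"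

definition face_path :: "'f set \<Rightarrow> 'v set \<Rightarrow> ('v \<Rightarrow> 'f set) \<Rightarrow> 'f list \<Rightarrow> 'v list \<Rightarrow> bool" where
  "face_path F V bdv fs vs \<longleftrightarrow>
     length fs = Suc (length vs) \<and> set fs \<subseteq> F \<and> set vs \<subseteq> V \<and> distinct vs \<and>
     (\<forall>i < length vs. fs ! i \<in> bdv (vs ! i) \<and> fs ! Suc i \<in> bdv (vs ! i))"

definition is_cut_set :: "'f set \<Rightarrow> 'v set \<Rightarrow> ('v \<Rightarrow> 'f set) \<Rightarrow> 'f set \<Rightarrow> bool" where
  "is_cut_set F V bdv K \<longleftrightarrow>
     (\<exists>v\<in>V. \<exists>v'\<in>V. \<forall>fs vs. face_path F V bdv fs vs \<and> hd fs \<in> bdv v \<and> last fs \<in> bdv v'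
         \<and> v \<notin> set vs \<and> v' \<notin> set vs \<longrightarrow> set fs \<inter> K \<noteq> {})"

text \<open>One round scans the candidate faces in some order; the state is (E, B').\<close>
primrec p5_scan :: "('f set \<Rightarrow> bool) \<Rightarrow> ('f \<Rightarrow> 'e set) \<Rightarrow> 'f set \<Rightarrow> 'f list
    \<Rightarrow> 'f set \<times> 'e set \<Rightarrow> 'f set \<times> 'e set" where
  "p5_scan iscut bdf Xb [] st = st"
| "p5_scan iscut bdf Xb (f # fs) st =
     p5_scan iscut bdf Xb fs
       (if \<not> iscut (Xb \<union> fst st \<union> {f}) then (fst st \<union> {f}, snd st \<union> bdf f) else st)"

text \<open>Reachable states (explored faces U, current E, current B). A round is only executed
 while some face of F - Xb is unexplored; within a round the candidate faces may be processed
 in any order.\<close>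
inductive p5_reach :: "'f set \<Rightarrow> 'v set \<Rightarrow> ('f \<Rightarrow> 'e set) \<Rightarrow> ('v \<Rightarrow> 'f set) \<Rightarrow> 'e set \<Rightarrow> 'f set
    \<Rightarrow> 'f set \<times> 'f set \<times> 'e set \<Rightarrow> bool"
  for F V bdf bdv SE Xb where
  init: "p5_reach F V bdf bdv SE Xb ({}, {}, SE)"
| step: "p5_reach F V bdf bdv SE Xb (U, Ee, B) \<Longrightarrow> \<not> (F - Xb \<subseteq> U) \<Longrightarrow> distinct fs \<Longrightarrow>
         set fs = {f \<in> F - Xb. f \<notin> U \<and> bdf f \<inter> B \<noteq> {}} \<Longrightarrow>
         p5_scan (is_cut_set F V bdv) bdf Xb fs (Ee, {}) = (Ee', B') \<Longrightarrow>
         p5_reach F V bdf bdv SE Xb (U \<union> set fs, Ee', B' - B)"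

text \<open>Eout is a (possible) output of P5: a reachable state in which all faces of F - Xb
 are explored (the procedure is assumed to terminate this way).\<close>
definition p5_output :: "'f set \<Rightarrow> 'v set \<Rightarrow> ('f \<Rightarrow> 'e set) \<Rightarrow> ('v \<Rightarrow> 'f set) \<Rightarrow> 'e set \<Rightarrow> 'f set
    \<Rightarrow> 'f set \<Rightarrow> bool" where
  "p5_output F V bdf bdv SE Xb Eout \<longleftrightarrow>
     (\<exists>U B. p5_reach F V bdf bdv SE Xb (U, Eout, B) \<and> F - Xb \<subseteq> U)"

end

theory Submission
  imports Defs
begin

lemma sdsum_empty[simp]: "sdsum A {} = {}"
  by (simp add: sdsum_def)

lemma sdsum_insert:
  assumes "finite I" "i \<notin> I"
  shows "sdsum A (insert i I) = symdiff (A i) (sdsum A I)"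
proof -
  have "x \<in> sdsum A (insert i I) \<longleftrightarrow> x \<in> symdiff (A i) (sdsum A I)" for x
  proof (cases "x \<in> A i")
    case True
    then have "{j \<in> insert i I. x \<in> A j} = insert i {j \<in> I. x \<in> A j}" by auto
    moreover have "card (insert i {j \<in> I. x \<in> A j}) = Suc (card {j \<in> I. x \<in> A j})"
      using assms by simp
    ultimately show ?thesis using True by (simp add: sdsum_def symdiff_def)
  next
    case False
    then have "{j \<in> insert i I. x \<in> A j} = {j \<in> I. x \<in> A j}" by auto
    then show ?thesis using False by (simp add: sdsum_def symdiff_def)
  qed
  then show ?thesis by blast
qed

lemma sdsum_single[simp]: "sdsum A {i} = A i"
  using sdsum_insert[of "{}" i A] by (simp add: symdiff_def)

lemma sdsum_sub: "x \<in> sdsum A I \<Longrightarrow> \<exists>i\<in>I. x \<in> A i"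
  unfolding sdsum_def by (metis (mono_tags, lifting) card.empty empty_Collect_eq mem_Collect_eq odd_card_imp_not_empty)

lemma sdsum_idx_symdiff:
  assumes "finite I" "finite J"
  shows "sdsum A (symdiff I J) = symdiff (sdsum A I) (sdsum A J)"
  using assms(2)
proof (induction J rule: finite_induct)
  case empty
  then show ?case by (simp add: symdiff_def)
next
  case (insert j J)
  show ?case
  proof (cases "j \<in> I")
    case True
    have e: "symdiff I (insert j J) = symdiff I J - {j}" using True insert.hyps by (auto simp: symdiff_def)
    have fin: "finite (symdiff I J - {j})" using assms insert by (simp add: symdiff_def)
    have "j \<in> symdiff I J" using True insert.hyps by (auto simp: symdiff_def)
    then have "symdiff I J = insert j (symdiff I J - {j})" by auto
    then have "sdsum A (symdiff I J) = symdiff (A j) (sdsum A (symdiff I J - {j}))"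
      using sdsum_insert[OF fin, of j A] by simp
    then show ?thesis using e insert sdsum_insert[of J j A]
      by (auto simp: symdiff_def)
  next
    case False
    have e: "symdiff I (insert j J) = insert j (symdiff I J)" using False insert.hyps by (auto simp: symdiff_def)
    have fin: "finite (symdiff I J)" using assms insert by (simp add: symdiff_def)
    have "j \<notin> symdiff I J" using False insert.hyps by (auto simp: symdiff_def)
    then show ?thesis using e insert sdsum_insert[OF fin, of j A] sdsum_insert[of J j A]
      by (auto simp: symdiff_def)
  qed
qed

lemma sdsum_pt_symdiff:
  assumes "finite I"
  shows "sdsum (\<lambda>i. symdiff (A i) (B i)) I = symdiff (sdsum A I) (sdsum B I)"
  using assms
proof (induction I rule: finite_induct)
  case empty then show ?case by (simp add: symdiff_def)
next
  case (insert i I)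
  then show ?case by (simp add: sdsum_insert) (auto simp: symdiff_def)
qed

definition covered :: "'v set \<Rightarrow> ('v \<Rightarrow> 'f set) \<Rightarrow> 'f set \<Rightarrow> 'f set \<Rightarrow> 'f \<Rightarrow> bool" where
  "covered V bdv Xb Ee f \<longleftrightarrow> f \<in> Ee \<or> (\<exists>S. x_stab V bdv S \<and> f \<in> S \<and> S - {f} \<subseteq> Xb \<union> Ee)"

locale cplx =
  fixes F :: "'f set" and V :: "'v set" and bdf :: "'f \<Rightarrow> 'e set" and bdv :: "'v \<Rightarrow> 'f set"
  assumes finF: "finite F" and finV: "finite V"
    and bdvF: "\<And>v. v \<in> V \<Longrightarrow> bdv v \<subseteq> F"
    and bdd: "\<And>v. v \<in> V \<Longrightarrow> sdsum bdf (bdv v) = {}"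
    and two: "\<And>f. f \<in> F \<Longrightarrow> card {v \<in> V. f \<in> bdv v} = 2"
    and conn: "\<And>v w. v \<in> V \<Longrightarrow> w \<in> V \<Longrightarrow>
       (v, w) \<in> {(a, b). a \<in> V \<and> b \<in> V \<and> (\<exists>f\<in>F. f \<in> bdv a \<and> f \<in> bdv b)}\<^sup>*"
begin

lemma sdsum_bdv_F: "W \<subseteq> V \<Longrightarrow> sdsum bdv W \<subseteq> F"
proof
  fix x assume "W \<subseteq> V" "x \<in> sdsum bdv W"
  then obtain w where "w \<in> W" "x \<in> bdv w" using sdsum_sub by metis
  then show "x \<in> F" using bdvF \<open>W \<subseteq> V\<close> by blast
qed

lemma bdf_symdiff:
  assumes "X \<subseteq> F" "Y \<subseteq> F"
  shows "sdsum bdf (symdiff X Y) = symdiff (sdsum bdf X) (sdsum bdf Y)"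
proof -
  have "finite X" "finite Y" using assms finF finite_subset by auto
  then show ?thesis by (rule sdsum_idx_symdiff)
qed

lemma bdbd: "W \<subseteq> V \<Longrightarrow> sdsum bdf (sdsum bdv W) = {}"
proof -
  assume W: "W \<subseteq> V"
  have "finite W" using W finV finite_subset by blast
  then show ?thesis using W
  proof (induction W rule: finite_induct)
    case empty then show ?case by simp
  next
    case (insert w W)
    then have "sdsum bdv (insert w W) = symdiff (bdv w) (sdsum bdv W)" by (simp add: sdsum_insert)
    moreover have "sdsum bdf (symdiff (bdv w) (sdsum bdv W)) = {}"
      using insert bdf_symdiff[of "bdv w" "sdsum bdv W"] bdvF[of w] sdsum_bdv_F[of W] bdd[of w]
      by (simp add: symdiff_def)
    ultimately show ?case by simp
  qed
qed

lemma x_stab_bd: "x_stab V bdv S \<Longrightarrow> sdsum bdf S = {}"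
  unfolding x_stab_def using bdbd by auto

lemma x_stab_F: "x_stab V bdv S \<Longrightarrow> S \<subseteq> F"
  unfolding x_stab_def using sdsum_bdv_F by blast

lemma x_stab_symdiff: "x_stab V bdv S \<Longrightarrow> x_stab V bdv T \<Longrightarrow> x_stab V bdv (symdiff S T)"
proof -
  assume "x_stab V bdv S" "x_stab V bdv T"
  then obtain W1 W2 where "W1 \<subseteq> V" "W2 \<subseteq> V" "S = sdsum bdv W1" "T = sdsum bdv W2"
    unfolding x_stab_def by blast
  moreover have "finite W1" "finite W2" using calculation finV finite_subset by blast+
  ultimately show ?thesis unfolding x_stab_def
    using sdsum_idx_symdiff[of W1 W2 bdv]
    by (intro exI[of _ "symdiff W1 W2"]) (auto simp: symdiff_def)
qed

lemma x_stab_sum: "finite I \<Longrightarrow> (\<forall>i\<in>I. x_stab V bdv (A i)) \<Longrightarrow> x_stab V bdv (sdsum A I)"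
proof (induction I rule: finite_induct)
  case empty
  then show ?case unfolding x_stab_def by (intro exI[of _ "{}"]) simp
next
  case (insert i I)
  then show ?case by (simp add: sdsum_insert x_stab_symdiff)
qed

lemma vols2:
  assumes "f \<in> F" "a \<in> V" "b \<in> V" "a \<noteq> b" "f \<in> bdv a" "f \<in> bdv b"
  shows "{v \<in> V. f \<in> bdv v} = {a, b}"
proof -
  have "{a, b} \<subseteq> {v \<in> V. f \<in> bdv v}" using assms by auto
  moreover have "finite {v \<in> V. f \<in> bdv v}" using finV by simp
  moreover have "card {a, b} = 2" using assms by simp
  ultimately show ?thesis using two[OF assms(1)] card_subset_eq by metis
qed

lemma cross:
  assumes W: "W \<subseteq> V" and "a \<in> W" "b \<in> V" "b \<notin> W" "f \<in> bdv a" "f \<in> bdv b"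
  shows "f \<in> sdsum bdv W"
proof -
  have ab: "a \<noteq> b" "a \<in> V" using assms by auto
  have fF: "f \<in> F" using bdvF assms ab by blast
  have "{i \<in> W. f \<in> bdv i} = {a}" using vols2[OF fF ab(2) assms(3) ab(1) assms(5,6)] W assms by auto
  then show ?thesis unfolding sdsum_def by simp
qed

lemma cross_inv:
  assumes W: "W \<subseteq> V" and f: "f \<in> sdsum bdv W"
  shows "\<exists>a\<in>W. \<exists>b\<in>V. b \<notin> W \<and> f \<in> bdv a \<and> f \<in> bdv b"
proof -
  obtain a where a: "a \<in> W" "f \<in> bdv a" using sdsum_sub[OF f] by blast
  then have fF: "f \<in> F" using bdvF W by blast
  let ?Q = "{v \<in> V. f \<in> bdv v}"
  have fin: "finite ?Q" using finV by simp
  have eq: "{i \<in> W. f \<in> bdv i} = ?Q \<inter> W" using W by auto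
  have odd: "odd (card (?Q \<inter> W))" using f eq unfolding sdsum_def by simp
  have "?Q \<inter> W \<noteq> ?Q"
  proof
    assume "?Q \<inter> W = ?Q"
    then show False using odd two[OF fF] by simp
  qed
  then obtain b where "b \<in> ?Q" "b \<notin> W" by blast
  then show ?thesis using a by blast
qed

lemma easy_cut:
  assumes W: "W \<subseteq> V" and ne: "sdsum bdv W \<noteq> {}" and sub: "sdsum bdv W \<subseteq> K"
  shows "is_cut_set F V bdv K"
proof -
  obtain f where f: "f \<in> sdsum bdv W" using ne by blast
  obtain a b where ab: "a \<in> W" "b \<in> V" "b \<notin> W" "f \<in> bdv a" "f \<in> bdv b"
    using cross_inv[OF W f] by blast
  have aV: "a \<in> V" using ab W by blast
  have noncross: "y \<in> W" if "x \<in> W" "y \<in> V" "g \<in> bdv x" "g \<in> bdv y" "g \<notin> K" for x y g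
    using cross[OF W that(1,2) _ that(3,4)] that(5) sub by blast
  show ?thesis unfolding is_cut_set_def
  proof (rule bexI[OF _ aV], rule bexI[OF _ ab(2)], intro allI impI)
    fix fs vs
    assume H: "face_path F V bdv fs vs \<and> hd fs \<in> bdv a \<and> last fs \<in> bdv b \<and> a \<notin> set vs \<and> b \<notin> set vs"
    show "set fs \<inter> K \<noteq> {}"
    proof (rule notI)
      assume dis: "set fs \<inter> K = {}"
      have len: "length fs = Suc (length vs)" and vsV: "set vs \<subseteq> V"
        and adj: "\<And>i. i < length vs \<Longrightarrow> fs ! i \<in> bdv (vs ! i) \<and> fs ! Suc i \<in> bdv (vs ! i)"
        using H unfolding face_path_def by auto
      have nK: "fs ! i \<notin> K" if "i < length fs" for i using dis that nth_mem by blast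
      have hd: "hd fs = fs ! 0" using len by (cases fs) auto
      have fsne: "fs \<noteq> []" using len by auto
      have lst: "last fs = fs ! length vs" using len fsne by (simp add: last_conv_nth)
      have allW: "vs ! i \<in> W" if "i < length vs" for i
        using that
      proof (induction i)
        case 0
        have "fs ! 0 \<in> bdv a" using H hd by simp
        moreover have "fs ! 0 \<in> bdv (vs ! 0)" using adj[OF 0] by simp
        moreover have "vs ! 0 \<in> V" using vsV 0 nth_mem by blast
        moreover have "fs ! 0 \<notin> K" using nK len by simp
        ultimately show ?case using noncross[OF ab(1)] by blast
      next
        case (Suc i)
        have i: "i < length vs" using Suc by simp
        have "vs ! i \<in> W" using Suc.IH i by simp
        moreover have "fs ! Suc i \<in> bdv (vs ! i)" using adj[OF i] by simp
        moreover have "fs ! Suc i \<in> bdv (vs ! Suc i)" using adj[OF Suc.prems] by simp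
        moreover have "vs ! Suc i \<in> V" using vsV Suc.prems nth_mem by blast
        moreover have "fs ! Suc i \<notin> K" using nK len Suc.prems by simp
        ultimately show ?case using noncross by blast
      qed
      show False
      proof (cases "vs = []")
        case True
        have "fs ! 0 \<in> bdv a" using H hd by simp
        moreover have "fs ! 0 \<in> bdv b" using H lst True by simp
        moreover have "fs ! 0 \<notin> K" using nK len by simp
        ultimately show ?thesis using noncross[OF ab(1) ab(2)] ab(3) by blast
      next
        case False
        then obtain i where i: "Suc i = length vs" by (cases vs) auto
        then have il: "i < length vs" by simp
        have "vs ! i \<in> W" using allW[OF il] .
        moreover have "fs ! Suc i \<in> bdv (vs ! i)" using adj[OF il] by simp
        moreover have "fs ! Suc i \<in> bdv b" using H lst i by simp
        moreover have "fs ! Suc i \<notin> K" using nK len i by simp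
        ultimately show ?thesis using noncross[OF _ ab(2)] ab(3) by blast
      qed
    qed
  qed
qed

lemma path_ext:
  assumes "(v, w) \<in> {(a, b). a \<in> V \<and> b \<in> V \<and> (\<exists>f. f \<notin> K \<and> f \<in> bdv a \<and> f \<in> bdv b)}\<^sup>*"
  shows "v = w \<or> (\<exists>fs vs. face_path F V bdv fs vs \<and> hd fs \<in> bdv v \<and> last fs \<in> bdv w \<and>
            v \<notin> set vs \<and> w \<notin> set vs \<and> set fs \<inter> K = {})"
  using assms
proof (induction rule: rtrancl_induct)
  case base then show ?case by simp
next
  case (step w u)
  from step.hyps(2) obtain g where g: "w \<in> V" "u \<in> V" "g \<notin> K" "g \<in> bdv w" "g \<in> bdv u" by blast
  have gF: "g \<in> F" using bdvF g by blast
  show ?case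
  proof (cases "u = v")
    case True then show ?thesis by simp
  next
    case uv: False
    show ?thesis
    proof (cases "v = w")
      case True
      have "face_path F V bdv [g] []" unfolding face_path_def using gF by simp
      then show ?thesis using True g uv by (intro disjI2 exI[of _ "[g]"] exI[of _ "[]"]) auto
    next
      case vw: False
      then obtain fs vs where P: "face_path F V bdv fs vs" "hd fs \<in> bdv v" "last fs \<in> bdv w"
        "v \<notin> set vs" "w \<notin> set vs" "set fs \<inter> K = {}" using step.IH by blast
      have len: "length fs = Suc (length vs)" and fsF: "set fs \<subseteq> F" and vsV: "set vs \<subseteq> V"
        and dist: "distinct vs"
        and adj: "\<And>i. i < length vs \<Longrightarrow> fs ! i \<in> bdv (vs ! i) \<and> fs ! Suc i \<in> bdv (vs ! i)"
        using P(1) unfolding face_path_def by auto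
      have fsne: "fs \<noteq> []" using len by auto
      show ?thesis
      proof (cases "u = w")
        case True then show ?thesis using P by blast
      next
        case uw: False
        show ?thesis
        proof (cases "u \<in> set vs")
          case True
          then obtain j where j: "j < length vs" "vs ! j = u" by (auto simp: in_set_conv_nth)
          define fs' where "fs' = take (Suc j) fs"
          define vs' where "vs' = take j vs"
          have len': "length fs' = Suc j" "length vs' = j" using j len by (auto simp: fs'_def vs'_def)
          have nth': "fs' ! i = fs ! i" if "i < Suc j" for i using that by (simp add: fs'_def)
          have nthv': "vs' ! i = vs ! i" if "i < j" for i using that by (simp add: vs'_def)
          have fp: "face_path F V bdv fs' vs'" unfolding face_path_def
          proof (intro conjI allI impI)
            show "length fs' = Suc (length vs')" using len' by simp
            have "set fs' \<subseteq> set fs" unfolding fs'_def by (rule set_take_subset)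
            then show "set fs' \<subseteq> F" using fsF by (rule subset_trans)
            have "set vs' \<subseteq> set vs" unfolding vs'_def by (rule set_take_subset)
            then show "set vs' \<subseteq> V" using vsV by (rule subset_trans)
            show "distinct vs'" using dist by (simp add: vs'_def)
          next
            fix i assume i: "i < length vs'"
            then have i2: "i < length vs" "i < Suc j" "Suc i < Suc j" "i < j" using len' j by auto
            show "fs' ! i \<in> bdv (vs' ! i)" using adj[OF i2(1)] nth'[OF i2(2)] nthv'[OF i2(4)] by simp
          next
            fix i assume i: "i < length vs'"
            then have i2: "i < length vs" "i < Suc j" "Suc i < Suc j" "i < j" using len' j by auto
            show "fs' ! Suc i \<in> bdv (vs' ! i)" using adj[OF i2(1)] nth'[OF i2(3)] nthv'[OF i2(4)] by simp
          qed
          have ne': "fs' \<noteq> []" using len' by auto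
          have "hd fs' = fs' ! 0" using ne' by (simp add: hd_conv_nth)
          also have "\<dots> = fs ! 0" using nth' by simp
          also have "\<dots> = hd fs" using fsne by (simp add: hd_conv_nth)
          finally have hd': "hd fs' \<in> bdv v" using P(2) by simp
          have "last fs' = fs' ! j" using ne' len' by (simp add: last_conv_nth)
          also have "\<dots> = fs ! j" using nth' by simp
          finally have last': "last fs' \<in> bdv u" using adj[OF j(1)] j(2) by simp
          have "set vs' \<subseteq> set vs" unfolding vs'_def by (rule set_take_subset)
          then have v': "v \<notin> set vs'" using P(4) by blast
          have u': "u \<notin> set vs'"
          proof
            assume "u \<in> set vs'"
            then obtain i where i: "i < j" "vs' ! i = u" using len' by (auto simp: in_set_conv_nth)
            then have "vs ! i = vs ! j" using nthv' j by simp
            moreover have "i < length vs" using i j by simp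
            ultimately have "i = j" using nth_eq_iff_index_eq[OF dist _ j(1)] by blast
            then show False using i by simp
          qed
          have "set fs' \<subseteq> set fs" unfolding fs'_def by (rule set_take_subset)
          then have K': "set fs' \<inter> K = {}" using P(6) by blast
          show ?thesis using fp hd' last' v' u' K' by blast
        next
          case False
          define fs' where "fs' = fs @ [g]"
          define vs' where "vs' = vs @ [w]"
          have fp: "face_path F V bdv fs' vs'" unfolding face_path_def
          proof (intro conjI allI impI)
            show "length fs' = Suc (length vs')" using len by (simp add: fs'_def vs'_def)
            show "set fs' \<subseteq> F" using fsF gF by (simp add: fs'_def)
            show "set vs' \<subseteq> V" using vsV g by (simp add: vs'_def)
            show "distinct vs'" using dist P(5) by (simp add: vs'_def)
          next
            fix i assume i: "i < length vs'"
            have both: "fs' ! i \<in> bdv (vs' ! i) \<and> fs' ! Suc i \<in> bdv (vs' ! i)"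
            proof (cases "i < length vs")
              case True
              then show ?thesis using adj[OF True] len by (simp add: fs'_def vs'_def nth_append)
            next
              case False
              then have ie: "i = length vs" using i by (simp add: vs'_def)
              have "fs ! length vs = last fs" using fsne len by (simp add: last_conv_nth)
              then show ?thesis using ie P(3) g len by (simp add: fs'_def vs'_def nth_append)
            qed
            then show "fs' ! i \<in> bdv (vs' ! i)" by blast
            from both show "fs' ! Suc i \<in> bdv (vs' ! i)" by blast
          qed
          have hd': "hd fs' \<in> bdv v" using fsne P(2) by (simp add: fs'_def)
          have last': "last fs' \<in> bdv u" using g by (simp add: fs'_def)
          have v': "v \<notin> set vs'" using P(4) vw by (simp add: vs'_def)
          have u': "u \<notin> set vs'" using False uw by (simp add: vs'_def)
          have K': "set fs' \<inter> K = {}" using P(6) g by (simp add: fs'_def)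
          show ?thesis using fp hd' last' v' u' K' by blast
        qed
      qed
    qed
  qed
qed

lemma hard_cut:
  assumes Fne: "F \<noteq> {}" and cut: "is_cut_set F V bdv K"
  shows "\<exists>W\<subseteq>V. sdsum bdv W \<noteq> {} \<and> sdsum bdv W \<subseteq> K"
proof (rule ccontr)
  assume no: "\<not> ?thesis"
  from cut obtain v v' where vV: "v \<in> V" "v' \<in> V" and
    C: "\<And>fs vs. face_path F V bdv fs vs \<and> hd fs \<in> bdv v \<and> last fs \<in> bdv v'
         \<and> v \<notin> set vs \<and> v' \<notin> set vs \<longrightarrow> set fs \<inter> K \<noteq> {}"
    unfolding is_cut_set_def by blast
  define R where "R = {(a, b). a \<in> V \<and> b \<in> V \<and> (\<exists>f. f \<notin> K \<and> f \<in> bdv a \<and> f \<in> bdv b)}"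
  define W where "W = {w \<in> V. (v, w) \<in> R\<^sup>*}"
  have WV: "W \<subseteq> V" by (auto simp: W_def)
  have vW: "v \<in> W" using vV by (simp add: W_def)
  have sub: "sdsum bdv W \<subseteq> K"
  proof
    fix f assume f: "f \<in> sdsum bdv W"
    obtain a b where ab: "a \<in> W" "b \<in> V" "b \<notin> W" "f \<in> bdv a" "f \<in> bdv b"
      using cross_inv[OF WV f] by blast
    show "f \<in> K"
    proof (rule ccontr)
      assume "f \<notin> K"
      then have "(a, b) \<in> R" using ab WV by (auto simp: R_def)
      moreover have "(v, a) \<in> R\<^sup>*" using ab(1) by (simp add: W_def)
      ultimately have "(v, b) \<in> R\<^sup>*" by simp
      then show False using ab(2,3) by (simp add: W_def)
    qed
  qed
  have S0: "sdsum bdv W = {}" using no sub WV by blast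
  have allW: "w \<in> W" if "w \<in> V" for w
  proof -
    have "(v, w) \<in> {(a, b). a \<in> V \<and> b \<in> V \<and> (\<exists>f\<in>F. f \<in> bdv a \<and> f \<in> bdv b)}\<^sup>*"
      using conn vV that by blast
    then show ?thesis
    proof (induction rule: rtrancl_induct)
      case base then show ?case using vW .
    next
      case (step a b)
      then obtain f where "a \<in> V" "b \<in> V" "f \<in> bdv a" "f \<in> bdv b" by blast
      then show ?case using cross[OF WV step.IH, of b f] S0 by blast
    qed
  qed
  have "(v, v') \<in> R\<^sup>*" using allW[OF vV(2)] by (simp add: W_def)
  then have "v = v' \<or> (\<exists>fs vs. face_path F V bdv fs vs \<and> hd fs \<in> bdv v \<and> last fs \<in> bdv v' \<and>
            v \<notin> set vs \<and> v' \<notin> set vs \<and> set fs \<inter> K = {})"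
    using path_ext[of v v' K] unfolding R_def by blast
  then have vv: "v = v'" using C by blast
  have bne: "bdv v \<noteq> {}"
  proof -
    obtain f where fF: "f \<in> F" using Fne by blast
    have "{x \<in> V. f \<in> bdv x} \<noteq> {}" using two[OF fF] by (metis card.empty zero_neq_numeral)
    then obtain a where a: "a \<in> V" "f \<in> bdv a" by blast
    have "(v, a) \<in> {(a, b). a \<in> V \<and> b \<in> V \<and> (\<exists>f\<in>F. f \<in> bdv a \<and> f \<in> bdv b)}\<^sup>*"
      using conn vV a by blast
    then show ?thesis
    proof (cases rule: converse_rtranclE)
      case base then show ?thesis using a by blast
    next
      case (step c) then show ?thesis by blast
    qed
  qed
  have "\<not> bdv v \<subseteq> K"
  proof
    assume "bdv v \<subseteq> K"
    then show False using no bne vV by (metis empty_subsetI insert_subset sdsum_single)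
  qed
  then obtain g where g: "g \<in> bdv v" "g \<notin> K" by blast
  have "face_path F V bdv [g] []" unfolding face_path_def using g bdvF vV by auto
  then show False using C[of "[g]" "[]"] g vv by simp
qed

lemma covered_mono: "covered V bdv Xb Ee f \<Longrightarrow> Ee \<subseteq> Ee' \<Longrightarrow> covered V bdv Xb Ee' f"
  unfolding covered_def by blast

lemma scan_inv:
  assumes Fne: "F \<noteq> {}"
  shows "set fs \<subseteq> F - Xb \<Longrightarrow> fst st \<subseteq> F - Xb \<Longrightarrow> \<not> is_cut_set F V bdv (Xb \<union> fst st) \<Longrightarrow>
    p5_scan (is_cut_set F V bdv) bdf Xb fs st = st' \<Longrightarrow>
    fst st \<subseteq> fst st' \<and> fst st' \<subseteq> F - Xb \<and> \<not> is_cut_set F V bdv (Xb \<union> fst st') \<and>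
    (\<forall>f\<in>set fs. covered V bdv Xb (fst st') f)"
proof (induction fs arbitrary: st)
  case Nil
  then show ?case by simp
next
  case (Cons f fs)
  show ?case
  proof (cases "is_cut_set F V bdv (Xb \<union> fst st \<union> {f})")
    case False
    define st1 where "st1 = (fst st \<union> {f}, snd st \<union> bdf f)"
    have sc: "p5_scan (is_cut_set F V bdv) bdf Xb fs st1 = st'" using Cons.prems False by (simp add: st1_def)
    have a: "fst st1 \<subseteq> F - Xb" using Cons.prems by (simp add: st1_def)
    have b: "\<not> is_cut_set F V bdv (Xb \<union> fst st1)" using False by (simp add: st1_def Un_assoc)
    have c: "set fs \<subseteq> F - Xb" using Cons.prems by simp
    have IH: "fst st1 \<subseteq> fst st' \<and> fst st' \<subseteq> F - Xb \<and> \<not> is_cut_set F V bdv (Xb \<union> fst st') \<and>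
      (\<forall>f\<in>set fs. covered V bdv Xb (fst st') f)" using Cons.IH[OF c a b sc] .
    then have "f \<in> fst st'" by (auto simp: st1_def)
    then have "covered V bdv Xb (fst st') f" by (simp add: covered_def)
    then show ?thesis using IH by (auto simp: st1_def)
  next
    case True
    have sc: "p5_scan (is_cut_set F V bdv) bdf Xb fs st = st'" using Cons.prems True by simp
    have c: "set fs \<subseteq> F - Xb" using Cons.prems by simp
    have IH: "fst st \<subseteq> fst st' \<and> fst st' \<subseteq> F - Xb \<and> \<not> is_cut_set F V bdv (Xb \<union> fst st') \<and>
      (\<forall>f\<in>set fs. covered V bdv Xb (fst st') f)" using Cons.IH[OF c Cons.prems(2,3) sc] .
    obtain W where W: "W \<subseteq> V" "sdsum bdv W \<noteq> {}" "sdsum bdv W \<subseteq> Xb \<union> fst st \<union> {f}"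
      using hard_cut[OF Fne True] by blast
    have fS: "f \<in> sdsum bdv W"
    proof (rule ccontr)
      assume "f \<notin> sdsum bdv W"
      then have "sdsum bdv W \<subseteq> Xb \<union> fst st" using W(3) by blast
      then show False using easy_cut[OF W(1,2)] Cons.prems(3) by blast
    qed
    have "x_stab V bdv (sdsum bdv W)" unfolding x_stab_def using W(1) by blast
    then have "covered V bdv Xb (fst st) f" unfolding covered_def using fS W(3) by blast
    then have "covered V bdv Xb (fst st') f" using covered_mono IH by blast
    then show ?thesis using IH by simp
  qed
qed

lemma reach_inv:
  assumes Fne: "F \<noteq> {}" and Xnc: "\<not> is_cut_set F V bdv Xb"
  shows "p5_reach F V bdf bdv SE Xb s \<Longrightarrow> fst (snd s) \<subseteq> F - Xb \<and>
     \<not> is_cut_set F V bdv (Xb \<union> fst (snd s)) \<and> (\<forall>f\<in>fst s. covered V bdv Xb (fst (snd s)) f)"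
proof (induction rule: p5_reach.induct)
  case init
  then show ?case using Xnc by simp
next
  case (step U Ee B fs Ee' B')
  have c: "set fs \<subseteq> F - Xb" using step.hyps(4) by blast
  have R: "Ee \<subseteq> Ee' \<and> Ee' \<subseteq> F - Xb \<and> \<not> is_cut_set F V bdv (Xb \<union> Ee') \<and>
    (\<forall>f\<in>set fs. covered V bdv Xb Ee' f)"
    using scan_inv[OF Fne c, of "(Ee, {})" "(Ee', B')"] step.IH step.hyps(5) by simp
  have "\<forall>f\<in>U. covered V bdv Xb Ee' f" using step.IH R covered_mono by auto
  then show ?case using R by auto
qed

lemma exist:
  assumes GF: "G \<subseteq> F"
    and H: "\<And>f. f \<in> F \<Longrightarrow> f \<notin> G \<Longrightarrow> \<exists>S. x_stab V bdv S \<and> f \<in> S \<and> S - {f} \<subseteq> G"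
  shows "F0 \<subseteq> F \<Longrightarrow> \<exists>Eh \<subseteq> G. sdsum bdf Eh = sdsum bdf F0"
proof (induction "card (F0 - G)" arbitrary: F0 rule: less_induct)
  case less
  show ?case
  proof (cases "F0 \<subseteq> G")
    case True then show ?thesis by blast
  next
    case False
    then obtain f where f: "f \<in> F0" "f \<notin> G" by blast
    have fF: "f \<in> F" using less.prems f(1) by blast
    obtain S where S: "x_stab V bdv S" "f \<in> S" "S - {f} \<subseteq> G" using H[OF fF f(2)] by blast
    define F1 where "F1 = symdiff F0 S"
    have SF: "S \<subseteq> F" using x_stab_F S(1) .
    have F1F: "F1 \<subseteq> F" using less.prems SF unfolding F1_def symdiff_def by blast
    have bd: "sdsum bdf F1 = sdsum bdf F0"
      using bdf_symdiff[OF less.prems SF] x_stab_bd[OF S(1)] unfolding F1_def symdiff_def by simp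
    have sub: "F1 - G \<subseteq> (F0 - G) - {f}" using S f unfolding F1_def symdiff_def by blast
    have "F0 - G \<subseteq> F" using less.prems by blast
    then have fin: "finite (F0 - G)" using finF finite_subset by blast
    have "card (F1 - G) \<le> card ((F0 - G) - {f})" using card_mono[OF _ sub] fin by blast
    also have "\<dots> < card (F0 - G)" using fin f by (intro card_Diff1_less) auto
    finally have lt: "card (F1 - G) < card (F0 - G)" .
    have "\<exists>Eh \<subseteq> G. sdsum bdf Eh = sdsum bdf F1" using less.hyps[OF lt F1F] .
    then show ?thesis using bd by auto
  qed
qed

end

lemma scan_sub: "fst (p5_scan iscut bdf Xb fs st) \<subseteq> fst st \<union> set fs"
proof (induction fs arbitrary: st)
  case Nil then show ?case by simp
next
  case (Cons f fs)
  show ?case using Cons.IH[of "(if \<not> iscut (Xb \<union> fst st \<union> {f}) then (fst st \<union> {f}, snd st \<union> bdf f) else st)"]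
    by (auto split: if_splits)
qed

lemma reach_sub: "p5_reach F V bdf bdv SE Xb s \<Longrightarrow> fst (snd s) \<subseteq> F - Xb"
proof (induction rule: p5_reach.induct)
  case init then show ?case by simp
next
  case (step U Ee B fs Ee' B')
  have "Ee' \<subseteq> Ee \<union> set fs" using scan_sub[of "is_cut_set F V bdv" bdf Xb fs "(Ee, {})"] step.hyps(5) by simp
  then show ?case using step.IH step.hyps(4) by auto
qed

theorem theorem2:
  fixes P :: "'p set" and E :: "'e set" and F :: "'f set" and V :: "'v set"
    and bde :: "'e \<Rightarrow> 'p set" and bdf :: "'f \<Rightarrow> 'e set" and bdv :: "'v \<Rightarrow> 'f set"
    and k :: nat and Lx :: "nat \<Rightarrow> 'f set" and Xb :: "'f set"
    and F0 :: "'f set" and SE :: "'e set" and Eout :: "'f set"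
  assumes cx: "periodic_cell_complex P E F V bde bdf bdv"
    and basis: "x_logical_basis F V bdf bdv k Lx"
    and ab: "artificial_boundary F V bdv k Lx Xb"
    and F0: "F0 \<subseteq> F" and SE: "SE = sdsum bdf F0"
    and out: "p5_output F V bdf bdv SE Xb Eout"
  shows "(\<exists>Eh \<subseteq> Eout \<union> Xb. sdsum bdf Eh = SE) \<and>
         (\<forall>E1 E2. E1 \<subseteq> Eout \<union> Xb \<longrightarrow> E2 \<subseteq> Eout \<union> Xb \<longrightarrow>
             sdsum bdf E1 = SE \<longrightarrow> sdsum bdf E2 = SE \<longrightarrow> symdiff E1 E2 \<subseteq> Xb)"
proof -
  interpret cplx F V bdf bdv
    using cx unfolding periodic_cell_complex_def by unfold_locales auto
  from ab obtain Lr where LrF: "\<And>i. i < k \<Longrightarrow> Lr i \<subseteq> F"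
    and Lrs: "\<And>i. i < k \<Longrightarrow> x_stab V bdv (symdiff (Lr i) (Lx i))"
    and Xb_def: "Xb = (\<Union>i<k. Lr i)"
    and nostab: "\<And>S. S \<subseteq> Xb \<Longrightarrow> S \<noteq> {} \<Longrightarrow> \<not> x_stab V bdv S"
    unfolding artificial_boundary_def by blast
  have XbF: "Xb \<subseteq> F" using LrF Xb_def by blast
  from out obtain U B where R: "p5_reach F V bdf bdv SE Xb (U, Eout, B)" and UF: "F - Xb \<subseteq> U"
    unfolding p5_output_def by blast
  have EoF: "Eout \<subseteq> F - Xb" using reach_sub[OF R] by simp
  show ?thesis
  proof (cases "F = {}")
    case True
    then have e: "Eout \<union> Xb = {}" "F0 = {}" using EoF XbF F0 by auto
    then have se: "SE = {}" using SE by simp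
    show ?thesis
    proof (intro conjI allI impI)
      show "\<exists>Eh \<subseteq> Eout \<union> Xb. sdsum bdf Eh = SE" using se by (intro exI[of _ "{}"]) simp
    next
      fix E1 E2 :: "'f set"
      assume "E1 \<subseteq> Eout \<union> Xb" "E2 \<subseteq> Eout \<union> Xb"
      then have "E1 = {}" "E2 = {}" using e by auto
      then show "symdiff E1 E2 \<subseteq> Xb" by (simp add: symdiff_def)
    qed
  next
    case Fne: False
    have Xnc: "\<not> is_cut_set F V bdv Xb"
    proof (rule notI)
      assume c: "is_cut_set F V bdv Xb"
      obtain W where W: "W \<subseteq> V" "sdsum bdv W \<noteq> {}" "sdsum bdv W \<subseteq> Xb"
        using hard_cut[OF Fne c] by (elim exE conjE)
      have xs: "x_stab V bdv (sdsum bdv W)" unfolding x_stab_def using W(1) by (intro exI[of _ W]) simp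
      show False using nostab[OF W(3) W(2)] xs by (rule notE)
    qed
    have inv: "Eout \<subseteq> F - Xb \<and> \<not> is_cut_set F V bdv (Xb \<union> Eout) \<and> (\<forall>f\<in>U. covered V bdv Xb Eout f)"
      using reach_inv[OF Fne Xnc R] by simp
    define G where "G = Eout \<union> Xb"
    have GF: "G \<subseteq> F" using EoF XbF by (auto simp: G_def)
    have "G = Xb \<union> Eout" unfolding G_def by (rule Un_commute)
    then have Gnc: "\<not> is_cut_set F V bdv G" using inv by simp
    have H: "\<exists>S. x_stab V bdv S \<and> f \<in> S \<and> S - {f} \<subseteq> G" if fh: "f \<in> F" "f \<notin> G" for f
    proof -
      have "f \<in> U" using fh UF by (auto simp: G_def)
      then have "covered V bdv Xb Eout f" using inv by blast
      then obtain S where "x_stab V bdv S" "f \<in> S" "S - {f} \<subseteq> Xb \<union> Eout"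
        using fh(2) unfolding covered_def G_def by blast
      moreover have "Xb \<union> Eout = G" unfolding G_def by (rule Un_commute)
      ultimately show ?thesis by metis
    qed
    have part1: "\<exists>Eh \<subseteq> Eout \<union> Xb. sdsum bdf Eh = SE"
      using exist[OF GF H F0] SE unfolding G_def by simp
    have part2: "symdiff E1 E2 \<subseteq> Xb"
      if E1: "E1 \<subseteq> G" and E2: "E2 \<subseteq> G" and b1: "sdsum bdf E1 = SE" and b2: "sdsum bdf E2 = SE" for E1 E2
    proof -
      define D where "D = symdiff E1 E2"
      have DG: "D \<subseteq> G" using E1 E2 by (auto simp: D_def symdiff_def)
      have DF: "D \<subseteq> F" using DG GF by blast
      have Dbd: "sdsum bdf D = {}"
        using bdf_symdiff[of E1 E2] E1 E2 GF b1 b2 by (auto simp: D_def symdiff_def)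
      have B3: "\<forall>S \<subseteq> F. sdsum bdf S = {} \<longrightarrow> (\<exists>I \<subseteq> {..<k}. x_stab V bdv (symdiff S (sdsum Lx I)))"
        using basis unfolding x_logical_basis_def by (elim conjE)
      have "\<exists>I \<subseteq> {..<k}. x_stab V bdv (symdiff D (sdsum Lx I))" using B3 DF Dbd by simp
      then obtain I where I: "I \<subseteq> {..<k}" "x_stab V bdv (symdiff D (sdsum Lx I))"
        by (elim exE conjE)
      have finI: "finite I" using I(1) finite_subset by blast
      have "\<forall>i\<in>I. x_stab V bdv (symdiff (Lr i) (Lx i))" using Lrs I(1) by blast
      then have "x_stab V bdv (sdsum (\<lambda>i. symdiff (Lr i) (Lx i)) I)"
        by (rule x_stab_sum[OF finI])
      then have st2: "x_stab V bdv (symdiff (sdsum Lr I) (sdsum Lx I))"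
        using sdsum_pt_symdiff[OF finI, of Lr Lx] by simp
      define S where "S = symdiff D (sdsum Lr I)"
      have "S = symdiff (symdiff D (sdsum Lx I)) (symdiff (sdsum Lr I) (sdsum Lx I))"
        by (auto simp: S_def symdiff_def)
      then have Sst: "x_stab V bdv S" using x_stab_symdiff[OF I(2) st2] by simp
      have LrX: "sdsum Lr I \<subseteq> Xb"
      proof
        fix x assume "x \<in> sdsum Lr I"
        then obtain i where "i \<in> I" "x \<in> Lr i" using sdsum_sub by metis
        then show "x \<in> Xb" using I(1) Xb_def by blast
      qed
      have SG: "S \<subseteq> G" using DG LrX by (auto simp: S_def symdiff_def G_def)
      have S0: "S = {}"
      proof (rule ccontr)
        assume "S \<noteq> {}"
        moreover obtain W where "W \<subseteq> V" "S = sdsum bdv W" using Sst unfolding x_stab_def by blast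
        ultimately have "is_cut_set F V bdv G" using easy_cut SG by blast
        then show False using Gnc by blast
      qed
      then have "D = sdsum Lr I" by (auto simp: S_def symdiff_def)
      then show ?thesis using LrX by (simp add: D_def)
    qed
    show ?thesis using part1 part2 by (simp add: G_def)
  qed
qed

end
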